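(* Let $[G,f,\cdot]$ be an MC system on a finite graph $G$ with vertex set $\{1,\ldots,n\}$ and finite linearly ordered state set $P$, and let $x\in P^n$. Then for any two fair update schedules $W$ and $W'$, the state $x$ reaches a fixed point under $[G,f,W]$ and under $[G,f,W']$, and these two fixed points coincide; call it $z$. Moreover, every state $y\in P^n$ with $z\le y\le x$ reaches the fixed point $z$ (under any fair update schedule).
   Context: Let $G=(V,E)$ be a finite graph with $V=\{1,\ldots,n\}$, and let $P$ be a finite set with a linear order $\le$. Each vertex $i$ has a state $x_i\in P$ and a local function $f_i$ which takes as arguments the states of $i$ and of its neighbors $k_1,\ldots,k_{d_i}$ and returns a new state of $i$. An infinite sequence $W=W_1W_2\cdots$ of subsets $W_j\subseteq V$ is a fair update schedule if for every $k\ge1$ and every vertex $i$ there exists $l>k$ with $i\in W_l$. Given an initial state $x^{(0)}=x\in P^n$, the state $x^{(j)}$ at time $j>0$ is obtained from $x^{(j-1)}$ by letting every vertex $i\in W_j$ take the new state $f_i$ applied to the states (in $x^{(j-1)}$) of $i$ and its neighbors, while vertices not in $W_j$ keep their states; write $[G,f,W]^{(j)}(x)=x^{(j)}$. A state $x$ reaches a fixed point $z$ under $[G,f,W]$ if there is $k\ge0$ with $[G,f,W]^{(j)}(x)=[G,f,W]^{(k)}(x)=z$ for all $j>k$. $P^q$ carries the product partial order: $(x_1,\ldots,x_q)\le(y_1,\ldots,y_q)$ iff $x_j\le y_j$ for all $j$. A function $g\colon P^q\to P$ is monotone if $x\le y$ implies $g(x)\le g(y)$. A local function $f_i\colon(x_i,x_{k_1},\ldots,x_{k_{d_i}})\mapsto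 x_i'$ is contractive if $x_i'\le x_i$ for every argument. The system is an MC (monotone-contractive) system if every local function is monotone and contractive. *)

theory Defs
  imports Main
begin

text \<open>Vertices form a finite type 'v; states are elements of a finite linear order 'p.
  A global state is a function 'v \<Rightarrow> 'p (an element of P^n); its order is the
  pointwise (product) order le_fun.\<close>

definition graph :: "('v \<Rightarrow> 'v \<Rightarrow> bool) \<Rightarrow> bool" where
  "graph E \<longleftrightarrow> (\<forall>i j. E i j \<longrightarrow> E j i) \<and> (\<forall>i. \<not> E i i)"

definition local_fun :: "('v \<Rightarrow> 'v \<Rightarrow> bool) \<Rightarrow> 'v \<Rightarrow> (('v \<Rightarrow> 'p) \<Rightarrow> 'p) \<Rightarrow> bool" where
  "local_fun E i g \<longleftrightarrow>
     (\<forall>x y. (\<forall>j. (j = i \<or> E i j) \<longrightarrow> x j = y j) \<longrightarrow> g x = g y)"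

definition monotone_local :: "(('v \<Rightarrow> 'p::order) \<Rightarrow> 'p) \<Rightarrow> bool" where
  "monotone_local g \<longleftrightarrow> (\<forall>x y. x \<le> y \<longrightarrow> g x \<le> g y)"

definition contractive_local :: "'v \<Rightarrow> (('v \<Rightarrow> 'p::order) \<Rightarrow> 'p) \<Rightarrow> bool" where
  "contractive_local i g \<longleftrightarrow> (\<forall>x. g x \<le> x i)"

definition MC_system :: "('v \<Rightarrow> 'v \<Rightarrow> bool) \<Rightarrow> ('v \<Rightarrow> ('v \<Rightarrow> 'p::order) \<Rightarrow> 'p) \<Rightarrow> bool" where
  "MC_system E f \<longleftrightarrow> graph E \<and>
     (\<forall>i. local_fun E i (f i) \<and> monotone_local (f i) \<and> contractive_local i (f i))"

text \<open>Update schedules W = W_1 W_2 ...; index 0 is unused.\<close>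
definition fair :: "(nat \<Rightarrow> 'v set) \<Rightarrow> bool" where
  "fair W \<longleftrightarrow> (\<forall>k\<ge>1. \<forall>i. \<exists>l>k. i \<in> W l)"

fun run :: "('v \<Rightarrow> ('v \<Rightarrow> 'p) \<Rightarrow> 'p) \<Rightarrow> (nat \<Rightarrow> 'v set) \<Rightarrow> nat \<Rightarrow> ('v \<Rightarrow> 'p) \<Rightarrow> ('v \<Rightarrow> 'p)" where
  "run f W 0 x = x"
| "run f W (Suc j) x = (\<lambda>i. if i \<in> W (Suc j) then f i (run f W j x) else run f W j x i)"

definition reaches :: "('v \<Rightarrow> ('v \<Rightarrow> 'p) \<Rightarrow> 'p) \<Rightarrow> (nat \<Rightarrow> 'v set) \<Rightarrow> ('v \<Rightarrow> 'p) \<Rightarrow> ('v \<Rightarrow> 'p) \<Rightarrow> bool" where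
  "reaches f W x z \<longleftrightarrow> (\<exists>k. run f W k x = z \<and> (\<forall>j>k. run f W j x = z))"

end

theory Submission
  imports Defs
begin

lemma dec_stab:
  fixes s :: "nat \<Rightarrow> 'a::{order,finite}"
  assumes dec: "\<And>j. s (Suc j) \<le> s j"
  shows "\<exists>k. \<forall>j\<ge>k. s j = s k"
proof -
  have mono: "s j \<le> s k" if "k \<le> j" for j k
    using that
  proof (induction j rule: dec_induct)
    case base then show ?case by simp
  next
    case (step j) then show ?case using dec[of j] order_trans by blast
  qed
  let ?c = "\<lambda>j. card {v. v \<le> s j}"
  define m where "m = (LEAST n. \<exists>j. ?c j = n)"
  obtain k where km: "?c k = m" unfolding m_def by (rule LeastI_ex[of "\<lambda>n. \<exists>j. ?c j = n", THEN exE]) auto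
  have k: "\<And>j. ?c k \<le> ?c j" unfolding km m_def by (rule Least_le) auto
  have "s j = s k" if "k \<le> j" for j
  proof -
    have sub: "{v. v \<le> s j} \<subseteq> {v. v \<le> s k}" using mono[OF that] order_trans by blast
    have "?c k \<le> ?c j" by (rule k)
    have "{v. v \<le> s j} = {v. v \<le> s k}"
    proof (rule card_subset_eq[OF _ sub])
      show "finite {v. v \<le> s k}" by simp
      show "card {v. v \<le> s j} = card {v. v \<le> s k}"
        using card_mono[OF _ sub] \<open>?c k \<le> ?c j\<close> by simp
    qed
    hence "s k \<le> s j" by blast
    thus ?thesis using mono[OF that] by (rule antisym[rotated])
  qed
  thus ?thesis by blast
qed

theorem theorem2:
  fixes E :: "'v::finite \<Rightarrow> 'v \<Rightarrow> bool"
    and f :: "'v \<Rightarrow> ('v \<Rightarrow> 'p::{linorder,finite}) \<Rightarrow> 'p"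
    and x :: "'v \<Rightarrow> 'p"
  assumes "MC_system E f"
  shows "\<exists>z. (\<forall>W. fair W \<longrightarrow> reaches f W x z)
           \<and> (\<forall>y. z \<le> y \<and> y \<le> x \<longrightarrow> (\<forall>W. fair W \<longrightarrow> reaches f W y z))"
proof -
  have mon: "\<And>i a b. a \<le> b \<Longrightarrow> f i a \<le> f i b"
    and con: "\<And>i a. f i a \<le> a i"
    using assms unfolding MC_system_def monotone_local_def contractive_local_def by auto
  define S where "S = {y. y \<le> x \<and> (\<forall>i. f i y = y i)}"
  have finS: "finite S" by simp
  define bot :: "'v \<Rightarrow> 'p" where "bot = (\<lambda>_. Min UNIV)"
  have "bot \<le> x" unfolding bot_def le_fun_def by simp
  moreover have "f i bot = bot i" for i
    using con[of i bot] unfolding bot_def by (simp add: antisym)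
  ultimately have botS: "bot \<in> S" unfolding S_def by auto
  define z where "z = (\<lambda>i. Max ((\<lambda>y. y i) ` S))"
  have zge: "y \<le> z" if "y \<in> S" for y
    unfolding le_fun_def z_def using that finS by auto
  have zx: "z \<le> x"
  proof -
    have "z i \<le> x i" for i
    proof -
      have "z i \<in> (\<lambda>y. y i) ` S" unfolding z_def using botS finS by (intro Max_in) auto
      then obtain y where "y \<in> S" "z i = y i" by auto
      thus ?thesis unfolding S_def le_fun_def by auto
    qed
    thus ?thesis by (simp add: le_fun_def)
  qed
  have zfix: "f i z = z i" for i
  proof -
    have "z i \<in> (\<lambda>y. y i) ` S" unfolding z_def using botS finS by (intro Max_in) auto
    then obtain y where y: "y \<in> S" "z i = y i" by auto
    have "f i y \<le> f i z" using mon zge[OF y(1)] by blast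
    moreover have "f i y = y i" using y(1) S_def by auto
    ultimately show ?thesis using con[of i z] y(2) by (simp add: antisym)
  qed
  have zS: "z \<in> S" unfolding S_def using zx zfix by auto
  have main: "reaches f W y z" if yz: "z \<le> y" "y \<le> x" and fW: "fair W" for y W
  proof -
    let ?s = "\<lambda>j. run f W j y"
    have dec: "?s (Suc j) \<le> ?s j" for j
    proof -
      have "?s (Suc j) i \<le> ?s j i" for i
        using con[of i "?s j"] by simp
      thus ?thesis by (simp add: le_fun_def)
    qed
    have gez: "z \<le> ?s j" for j
    proof (induction j)
      case 0 then show ?case using yz by simp
    next
      case (Suc j)
      have "z i \<le> ?s (Suc j) i" for i
      proof (cases "i \<in> W (Suc j)")
        case True
        have "z i = f i z" using zfix by simp
        also have "\<dots> \<le> f i (?s j)" using mon Suc by blast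
        finally show ?thesis using True by simp
      next
        case False then show ?thesis using Suc by (simp add: le_fun_def)
      qed
      then show ?case by (simp add: le_fun_def)
    qed
    have mono: "?s j \<le> ?s 0" for j
    proof (induction j)
      case 0 then show ?case by simp
    next
      case (Suc j) then show ?case using dec[of j] by (rule order_trans[rotated])
    qed
    obtain k where k: "\<And>j. j \<ge> k \<Longrightarrow> ?s j = ?s k"
      using dec_stab[of ?s, OF dec] by blast
    let ?w = "?s k"
    have wfix: "f i ?w = ?w i" for i
    proof -
      obtain l where l: "l > max k 1" "i \<in> W l" proof -
        have "max k 1 \<ge> 1" by simp
        thus ?thesis using fW that unfolding fair_def by blast
      qed
      then obtain l' where l': "l = Suc l'" by (cases l) auto
      have kl: "k \<le> l" "k \<le> l'" using l l' by auto
      have "?w i = ?s l i" using k[OF kl(1)] by simp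
      also have "\<dots> = f i (?s l')" using l' l(2) by simp
      also have "\<dots> = f i ?w" using k[OF kl(2)] by simp
      finally have "?w i = f i ?w" .
      thus ?thesis by simp
    qed
    have "?w \<le> y" using mono[of k] by simp
    hence wx: "?w \<le> x" using yz(2) by (rule order_trans)
    have "?w \<in> S" unfolding S_def using wx wfix by blast
    hence "?w \<le> z" by (rule zge)
    hence wz: "?w = z" using gez[of k] by (rule antisym)
    have "\<forall>j>k. ?s j = z" using k wz by (simp add: less_imp_le)
    thus ?thesis unfolding reaches_def using wz by blast
  qed
  show ?thesis using main zx by blast
qed

end
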